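(* Let $w\ge 2$ and let $f$ be a function from the vertex set of $J(n,w)$ to $\{-1,0,1\}$, not identically zero, which is a $\lambda_1(n,w)$-eigenfunction of $J(n,w)$, where $\lambda_1(n,w)=(w-1)(n-w-1)-1$. Then $f$ is equivalent, up to multiplication by a non-zero constant, to one of the following functions of $x=(x_1,\dots,x_n)$: (1) $f_1(x)=1$ if $x_1=1,x_2=0$; $f_1(x)=-1$ if $x_1=0,x_2=1$; $f_1(x)=0$ otherwise (here $w\ge2$, $n\ge 2w$); (2) $f_2(x)=1$ if $x_1=x_2=1$; $f_2(x)=-1$ if $x_1=x_2=0$; $f_2(x)=0$ otherwise (here $w\ge 2$, $n=2w$); (3) $f_3(x)=1$ if $x_1=1$; $f_3(x)=-1$ if $x_1=0$ (here $w\ge2$, $n=2w$); (4) $f_4(x)=1$ if $\mathrm{Supp}(x)\subseteq\{1,\dots,n/2\}$; $f_4(x)=-1$ if $\mathrm{Supp}(x)\subseteq\{n/2+1,\dots,n\}$; $f_4(x)=0$ otherwise (here $w=2$, $n\ge 2w$, $n$ even).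
   Context: The Johnson graph $J(n,w)$ has as vertices the binary vectors $x=(x_1,\dots,x_n)$ with exactly $w$ ones; two vertices are adjacent iff they have exactly $w-1$ common ones. A real function $f$ on the vertex set is a $\lambda$-eigenfunction if it is not identically zero and $\lambda f(x)=\sum_{y\sim x} f(y)$ for every vertex $x$. $\mathrm{Supp}(x)$ is the set of coordinates where $x$ has a one. Two functions $g_1,g_2$ on $J(n,w)$ are equivalent if there is a permutation $\pi\in S_n$ of the coordinates with $g_1(x)=g_2(\pi x)$ for all vertices $x$. *)

theory Defs
  imports "HOL-Combinatorics.Permutations" Complex_Main
begin

text \<open>A binary vector x of length n with exactly w ones is identified with its
support Supp(x), a w-subset of {1..n}. Coordinate i of x is 1 iff i is in the set.\<close>

definition johnson_vertices :: "nat \<Rightarrow> nat \<Rightarrow> nat set set" where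
  "johnson_vertices n w = {S. S \<subseteq> {1..n} \<and> card S = w}"

definition johnson_adj :: "nat \<Rightarrow> nat set \<Rightarrow> nat set \<Rightarrow> bool" where
  "johnson_adj w S T \<longleftrightarrow> card (S \<inter> T) = w - 1"

definition is_eigenfunction :: "nat \<Rightarrow> nat \<Rightarrow> real \<Rightarrow> (nat set \<Rightarrow> real) \<Rightarrow> bool" where
  "is_eigenfunction n w lam f \<longleftrightarrow>
     (\<exists>x\<in>johnson_vertices n w. f x \<noteq> 0) \<and>
     (\<forall>x\<in>johnson_vertices n w.
        lam * f x = (\<Sum>y\<in>{y\<in>johnson_vertices n w. johnson_adj w x y}. f y))"

definition lambda1 :: "nat \<Rightarrow> nat \<Rightarrow> real" where
  "lambda1 n w = (real w - 1) * (real n - real w - 1) - 1"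

definition f1 :: "nat set \<Rightarrow> real" where
  "f1 S = (if 1 \<in> S \<and> 2 \<notin> S then 1 else if 1 \<notin> S \<and> 2 \<in> S then -1 else 0)"

definition f2 :: "nat set \<Rightarrow> real" where
  "f2 S = (if 1 \<in> S \<and> 2 \<in> S then 1 else if 1 \<notin> S \<and> 2 \<notin> S then -1 else 0)"

definition f3 :: "nat set \<Rightarrow> real" where
  "f3 S = (if 1 \<in> S then 1 else -1)"

definition f4 :: "nat \<Rightarrow> nat set \<Rightarrow> real" where
  "f4 n S = (if S \<subseteq> {1..n div 2} then 1
             else if S \<subseteq> {n div 2 + 1..n} then -1 else 0)"

text \<open>g1 and g2 are equivalent on J(n,w) if g1(x) = g2(pi x) for a coordinate
permutation pi; on supports, pi acts by taking images.\<close>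
definition equivalent_fun :: "nat \<Rightarrow> nat \<Rightarrow> (nat set \<Rightarrow> real) \<Rightarrow> (nat set \<Rightarrow> real) \<Rightarrow> bool" where
  "equivalent_fun n w g1 g2 \<longleftrightarrow>
     (\<exists>\<pi>. \<pi> permutes {1..n} \<and> (\<forall>x\<in>johnson_vertices n w. g1 x = g2 (\<pi> ` x)))"

end

theory Submission
  imports Defs "HOL-Analysis.Convex"
begin


definition Vs :: "nat set \<Rightarrow> nat \<Rightarrow> nat set set" where
  "Vs X k = {S. S \<subseteq> X \<and> card S = k}"

definition Dn :: "nat set \<Rightarrow> nat \<Rightarrow> (nat set \<Rightarrow> real) \<Rightarrow> nat set \<Rightarrow> real" where
  "Dn X k h T = (\<Sum>S\<in>Vs X k. if T \<subseteq> S then h S else 0)"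

definition Up :: "nat set \<Rightarrow> nat \<Rightarrow> (nat set \<Rightarrow> real) \<Rightarrow> nat set \<Rightarrow> real" where
  "Up X r g S = (\<Sum>T\<in>Vs X r. if T \<subseteq> S then g T else 0)"

lemma finite_Vs[simp]: "finite X \<Longrightarrow> finite (Vs X k)"
  unfolding Vs_def by (rule finite_subset[of _ "Pow X"]) auto

lemma card_between:
  assumes "finite X" "A \<subseteq> X" "card A \<le> r"
  shows "card {T. T \<subseteq> X \<and> A \<subseteq> T \<and> card T = r} = (card X - card A) choose (r - card A)"
proof -
  have fA: "finite A" using assms finite_subset by blast
  have "bij_betw (\<lambda>T. T - A) {T. T \<subseteq> X \<and> A \<subseteq> T \<and> card T = r} {B. B \<subseteq> X - A \<and> card B = r - card A}"
  proof (rule bij_betw_byWitness[where f' = "\<lambda>B. B \<union> A"])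
    show "\<forall>a\<in>{T. T \<subseteq> X \<and> A \<subseteq> T \<and> card T = r}. a - A \<union> A = a" by auto
    show "\<forall>a'\<in>{B. B \<subseteq> X - A \<and> card B = r - card A}. a' \<union> A - A = a'" by auto
    show "(\<lambda>T. T - A) ` {T. T \<subseteq> X \<and> A \<subseteq> T \<and> card T = r} \<subseteq> {B. B \<subseteq> X - A \<and> card B = r - card A}"
    proof (clarsimp)
      fix T assume "T \<subseteq> X" "A \<subseteq> T" "r = card T"
      moreover have "card (T - A) = card T - card A" using fA \<open>A \<subseteq> T\<close> by (rule card_Diff_subset)
      ultimately show "T - A \<subseteq> X - A \<and> card (T - A) = card T - card A" by blast
    qed
    show "(\<lambda>B. B \<union> A) ` {B. B \<subseteq> X - A \<and> card B = r - card A} \<subseteq> {T. T \<subseteq> X \<and> A \<subseteq> T \<and> card T = r}"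
    proof (rule image_subsetI)
      fix B assume "B \<in> {B. B \<subseteq> X - A \<and> card B = r - card A}"
      then have B: "B \<subseteq> X - A" "card B = r - card A" by auto
      have "finite B" using B assms finite_subset by blast
      then have "card (B \<union> A) = card B + card A" using B fA by (subst card_Un_disjoint) auto
      then show "B \<union> A \<in> {T. T \<subseteq> X \<and> A \<subseteq> T \<and> card T = r}" using B assms by auto
    qed
  qed
  then have "card {T. T \<subseteq> X \<and> A \<subseteq> T \<and> card T = r} = card {B. B \<subseteq> X - A \<and> card B = r - card A}"
    by (rule bij_betw_same_card)
  also have "\<dots> = card (X - A) choose (r - card A)" using assms by (intro n_subsets) auto
  finally show ?thesis using assms fA by (simp add: card_Diff_subset)
qed

lemma card_between0:
  assumes "finite X" "card A > r"
  shows "{T. T \<subseteq> X \<and> A \<subseteq> T \<and> card T = r} = {}"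
  using assms by (auto dest: card_mono[OF finite_subset])

lemma sum_count:
  fixes g :: "'b \<Rightarrow> real"
  assumes "finite P" "finite Q"
  shows "(\<Sum>p\<in>P. if R p then (\<Sum>q\<in>Q. if R' p q then g q else 0) else 0)
       = (\<Sum>q\<in>Q. g q * card {p\<in>P. R p \<and> R' p q})"
proof -
  have "(\<Sum>p\<in>P. if R p then (\<Sum>q\<in>Q. if R' p q then g q else 0) else 0)
      = (\<Sum>p\<in>P. \<Sum>q\<in>Q. if R p \<and> R' p q then g q else 0)"
    by (intro sum.cong) (auto simp: sum.neutral)
  also have "\<dots> = (\<Sum>q\<in>Q. \<Sum>p\<in>P. if R p \<and> R' p q then g q else 0)" by (rule sum.swap)
  also have "\<dots> = (\<Sum>q\<in>Q. g q * card {p\<in>P. R p \<and> R' p q})"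
    using assms by (intro sum.cong refl) (simp add: sum.If_cases mult.commute Int_def)
  finally show ?thesis .
qed

lemma UD_kernel:
  assumes "finite X"
  shows "Up X r (Dn X k h) S = (\<Sum>S'\<in>Vs X k. h S' * card {T\<in>Vs X r. T \<subseteq> S \<and> T \<subseteq> S'})"
  unfolding Up_def Dn_def using assms by (intro sum_count) auto

lemma DU_kernel:
  assumes "finite X"
  shows "Dn X k (Up X r g) T = (\<Sum>T'\<in>Vs X r. g T' * card {S\<in>Vs X k. T \<subseteq> S \<and> T' \<subseteq> S})"
  unfolding Up_def Dn_def using assms by (intro sum_count) auto

lemma card_sub_inter:
  assumes "finite X" "S \<subseteq> X"
  shows "card {T\<in>Vs X r. T \<subseteq> S \<and> T \<subseteq> S'} = card (S \<inter> S') choose r"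
proof -
  have "{T\<in>Vs X r. T \<subseteq> S \<and> T \<subseteq> S'} = {T. T \<subseteq> S \<inter> S' \<and> card T = r}"
    using assms unfolding Vs_def by auto
  moreover have "finite (S \<inter> S')" using assms finite_subset by blast
  ultimately show ?thesis using n_subsets[of "S \<inter> S'" r] by simp
qed

lemma card_sup_union:
  assumes "finite X" "T \<subseteq> X" "T' \<subseteq> X"
  shows "card {S\<in>Vs X k. T \<subseteq> S \<and> T' \<subseteq> S} =
     (if card (T \<union> T') \<le> k then (card X - card (T \<union> T')) choose (k - card (T \<union> T')) else 0)"
proof -
  have e: "{S\<in>Vs X k. T \<subseteq> S \<and> T' \<subseteq> S} = {S. S \<subseteq> X \<and> T \<union> T' \<subseteq> S \<and> card S = k}"
    unfolding Vs_def by auto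
  show ?thesis
  proof (cases "card (T \<union> T') \<le> k")
    case True
    then show ?thesis unfolding e using assms by (subst card_between) auto
  next
    case False
    then show ?thesis unfolding e using assms card_between0[of X k "T \<union> T'"] by auto
  qed
qed

lemma adjoint:
  assumes "finite X"
  shows "(\<Sum>T\<in>Vs X r. g T * Dn X k h T) = (\<Sum>S\<in>Vs X k. h S * Up X r g S)"
proof -
  have "(\<Sum>T\<in>Vs X r. g T * Dn X k h T) = (\<Sum>T\<in>Vs X r. \<Sum>S\<in>Vs X k. if T \<subseteq> S then g T * h S else 0)"
    unfolding Dn_def by (simp add: sum_distrib_left if_distrib cong: if_cong)
  also have "\<dots> = (\<Sum>S\<in>Vs X k. \<Sum>T\<in>Vs X r. if T \<subseteq> S then g T * h S else 0)" by (rule sum.swap)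
  also have "\<dots> = (\<Sum>S\<in>Vs X k. h S * Up X r g S)"
    unfolding Up_def by (simp add: sum_distrib_left if_distrib mult.commute cong: if_cong)
  finally show ?thesis .
qed

lemma commutator:
  assumes X: "finite X" and T: "T \<in> Vs X r" and r: "r \<ge> 1"
  shows "Dn X (Suc r) (Up X r g) T = Up X (r-1) (Dn X r g) T + (real (card X) - 2 * real r) * g T"
proof -
  have TX: "T \<subseteq> X" "card T = r" using T unfolding Vs_def by auto
  have pt: "real (card {S\<in>Vs X (Suc r). T \<subseteq> S \<and> T' \<subseteq> S}) =
      real (card {R\<in>Vs X (r-1). R \<subseteq> T \<and> R \<subseteq> T'}) + (if T' = T then real (card X) - 2 * real r else 0)"
    if T': "T' \<in> Vs X r" for T'
  proof -
    have T'X: "T' \<subseteq> X" "card T' = r" using T' unfolding Vs_def by auto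
    have fT: "finite T" "finite T'" using TX T'X X finite_subset by auto
    have cu: "card (T \<union> T') + card (T \<inter> T') = 2 * r"
      using card_Un_Int[OF fT] TX T'X by simp
    have c2: "card {R\<in>Vs X (r-1). R \<subseteq> T \<and> R \<subseteq> T'} = card (T \<inter> T') choose (r - 1)"
      using card_sub_inter[OF X TX(1)] .
    have c1: "card {S\<in>Vs X (Suc r). T \<subseteq> S \<and> T' \<subseteq> S} =
     (if card (T \<union> T') \<le> Suc r then (card X - card (T \<union> T')) choose (Suc r - card (T \<union> T')) else 0)"
      using card_sup_union[OF X TX(1) T'X(1)] .
    have nr: "r \<le> card X" using TX X card_mono by metis
    have mle: "card (T \<inter> T') \<le> r" using TX fT card_mono by (metis Int_lower1)
    show ?thesis
    proof (cases "T' = T")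
      case True
      then have "card (T \<union> T') = r" "card (T \<inter> T') = r" using TX by auto
      moreover have "r choose (r - 1) = r" using r by (cases r) auto
      ultimately show ?thesis using True c1 c2 nr r by (simp add: of_nat_diff)
    next
      case False
      have "card (T \<inter> T') \<noteq> r"
      proof
        assume "card (T \<inter> T') = r"
        then have "T \<inter> T' = T" "T \<inter> T' = T'" using TX T'X fT
          by (metis Int_lower1 Int_lower2 card_subset_eq)+
        then show False using False by auto
      qed
      then have mlt: "card (T \<inter> T') < r" using mle by auto
      show ?thesis
      proof (cases "card (T \<inter> T') = r - 1")
        case True
        then have "card (T \<union> T') = Suc r" using cu r by auto
        then show ?thesis using True c1 c2 False by simp
      next
        case F2: False
        then have "card (T \<inter> T') < r - 1" using mlt by auto
        moreover then have "\<not> card (T \<union> T') \<le> Suc r" using cu by auto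
        ultimately show ?thesis using c1 c2 False by simp
      qed
    qed
  qed
  have "Dn X (Suc r) (Up X r g) T = (\<Sum>T'\<in>Vs X r. g T' * card {S\<in>Vs X (Suc r). T \<subseteq> S \<and> T' \<subseteq> S})"
    by (rule DU_kernel[OF X])
  also have "\<dots> = (\<Sum>T'\<in>Vs X r. g T' * card {R\<in>Vs X (r-1). R \<subseteq> T \<and> R \<subseteq> T'}
         + (if T' = T then (real (card X) - 2 * real r) * g T else 0))"
    by (intro sum.cong refl) (auto simp: pt algebra_simps)
  also have "\<dots> = Up X (r-1) (Dn X r g) T + (real (card X) - 2 * real r) * g T"
    using T X by (simp add: sum.distrib UD_kernel)
  finally show ?thesis .
qed

definition Cz :: "nat set \<Rightarrow> nat \<Rightarrow> (nat set \<Rightarrow> real) \<Rightarrow> bool" where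
  "Cz X k h \<longleftrightarrow> (\<forall>i\<in>X. (\<Sum>S\<in>Vs X k. if i \<in> S then h S else 0) = 0)"

definition nsq :: "nat set \<Rightarrow> nat \<Rightarrow> (nat set \<Rightarrow> real) \<Rightarrow> real" where
  "nsq X k h = (\<Sum>S\<in>Vs X k. (h S)^2)"

lemma nsq_nonneg: "nsq X k h \<ge> 0"
  unfolding nsq_def by (simp add: sum_nonneg)

lemma preserve:
  assumes X: "finite X" and r: "r \<ge> 1"
  shows "(\<Sum>T\<in>Vs X r. if i \<in> T then Dn X (Suc r) h T else 0)
       = real r * (\<Sum>S\<in>Vs X (Suc r). if i \<in> S then h S else 0)"
proof -
  have "(\<Sum>T\<in>Vs X r. if i \<in> T then Dn X (Suc r) h T else 0)
     = (\<Sum>S\<in>Vs X (Suc r). h S * card {T\<in>Vs X r. i \<in> T \<and> T \<subseteq> S})"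
    unfolding Dn_def using X by (intro sum_count) auto
  also have "\<dots> = (\<Sum>S\<in>Vs X (Suc r). real r * (if i \<in> S then h S else 0))"
  proof (intro sum.cong refl)
    fix S assume S: "S \<in> Vs X (Suc r)"
    then have SX: "S \<subseteq> X" "card S = Suc r" unfolding Vs_def by auto
    have fS: "finite S" using SX X finite_subset by blast
    have e: "{T\<in>Vs X r. i \<in> T \<and> T \<subseteq> S} = {T. T \<subseteq> S \<and> {i} \<subseteq> T \<and> card T = r}"
      using SX unfolding Vs_def by auto
    show "h S * card {T\<in>Vs X r. i \<in> T \<and> T \<subseteq> S} = real r * (if i \<in> S then h S else 0)"
    proof (cases "i \<in> S")
      case True
      have "card {T. T \<subseteq> S \<and> {i} \<subseteq> T \<and> card T = r} = (card S - 1) choose (r - 1)"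
        using card_between[OF fS, of "{i}" r] True r by simp
      also have "\<dots> = r" using SX r by (cases r) auto
      finally show ?thesis using True e by simp
    next
      case False
      then have em: "{T\<in>Vs X r. i \<in> T \<and> T \<subseteq> S} = {}" by auto
      show ?thesis using False by (simp only: em card.empty) simp
    qed
  qed
  also have "\<dots> = real r * (\<Sum>S\<in>Vs X (Suc r). if i \<in> S then h S else 0)"
    by (simp add: sum_distrib_left)
  finally show ?thesis .
qed

lemma Cz_Dn:
  assumes X: "finite X" and r: "r \<ge> 1" and C: "Cz X (Suc r) h"
  shows "Cz X r (Dn X (Suc r) h)"
  using C preserve[OF X r] unfolding Cz_def by simp

lemma Vs1: "T \<in> Vs X 1 \<Longrightarrow> \<exists>i\<in>X. T = {i}"
  unfolding Vs_def by (auto simp: card_1_singleton_iff)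

lemma base2:
  assumes "Cz X 2 h" "T \<in> Vs X 1"
  shows "Dn X 2 h T = 0"
proof -
  obtain i where i: "i \<in> X" "T = {i}" using Vs1[OF assms(2)] by blast
  then show ?thesis using assms(1) unfolding Cz_def Dn_def by simp
qed

lemma Qbound:
  assumes X: "finite X" and k: "2 \<le> k"
  shows "\<forall>h. 2 * k \<le> card X \<longrightarrow> Cz X k h \<longrightarrow>
     nsq X (k-1) (Dn X k h) \<le> (real k - 2) * (real (card X) - real k - 1) * nsq X k h"
  using k
proof (induction k rule: nat_induct_at_least)
  case base
  show ?case
  proof (intro allI impI)
    fix h assume "2 * 2 \<le> card X" "Cz X 2 h"
    then have "nsq X 1 (Dn X 2 h) = 0" unfolding nsq_def using base2 by (intro sum.neutral) auto
    then show "nsq X (2-1) (Dn X 2 h) \<le> (real 2 - 2) * (real (card X) - real 2 - 1) * nsq X 2 h" by simp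
  qed
next
  case (Suc k)
  show ?case
  proof (intro allI impI)
    fix h assume N: "2 * Suc k \<le> card X" and C: "Cz X (Suc k) h"
    define N where "N = real (card X)"
    define g where "g = Dn X (Suc k) h"
    have k1: "k \<ge> 1" using Suc by auto
    have Cg: "Cz X k g" unfolding g_def by (rule Cz_Dn[OF X k1 C])
    define G where "G = nsq X k g"
    define H where "H = nsq X (Suc k) h"
    define \<beta> where "\<beta> = (real (Suc k) - 2) * (N - real (Suc k) - 1)"
    have IH: "nsq X (k-1) (Dn X k g) \<le> (real k - 2) * (N - real k - 1) * G"
      using Suc.IH N Cg unfolding N_def G_def by auto
    have G1: "G = (\<Sum>S\<in>Vs X (Suc k). h S * Up X k g S)"
      unfolding G_def nsq_def power2_eq_square using adjoint[OF X, where r=k and g=g and k="Suc k" and h=h]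
      unfolding g_def by simp
    have CS: "G^2 \<le> H * (\<Sum>S\<in>Vs X (Suc k). (Up X k g S)^2)"
      unfolding G1 H_def nsq_def by (rule Cauchy_Schwarz_ineq_sum)
    have "(\<Sum>S\<in>Vs X (Suc k). (Up X k g S)^2) = (\<Sum>T\<in>Vs X k. g T * Dn X (Suc k) (Up X k g) T)"
      unfolding power2_eq_square using adjoint[OF X, where r=k and g=g and k="Suc k" and h="Up X k g"] by simp
    also have "\<dots> = (\<Sum>T\<in>Vs X k. g T * Up X (k-1) (Dn X k g) T + (N - 2 * real k) * (g T)^2)"
    proof (intro sum.cong refl)
      fix T assume T: "T \<in> Vs X k"
      show "g T * Dn X (Suc k) (Up X k g) T = g T * Up X (k-1) (Dn X k g) T + (N - 2 * real k) * (g T)^2"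
        unfolding commutator[OF X T k1] N_def by (simp add: algebra_simps power2_eq_square)
    qed
    also have "\<dots> = (\<Sum>T\<in>Vs X k. g T * Up X (k-1) (Dn X k g) T) + (N - 2 * real k) * G"
      unfolding G_def nsq_def by (simp add: sum.distrib sum_distrib_left)
    also have "(\<Sum>T\<in>Vs X k. g T * Up X (k-1) (Dn X k g) T) = nsq X (k-1) (Dn X k g)"
      unfolding nsq_def power2_eq_square using adjoint[OF X, where r="k-1" and g="Dn X k g" and k=k and h=g] by simp
    finally have E: "(\<Sum>S\<in>Vs X (Suc k). (Up X k g S)^2) = nsq X (k-1) (Dn X k g) + (N - 2 * real k) * G" .
    have Gn: "G \<ge> 0" unfolding G_def by (rule nsq_nonneg)
    have Hn: "H \<ge> 0" unfolding H_def by (rule nsq_nonneg)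
    have "(\<Sum>S\<in>Vs X (Suc k). (Up X k g S)^2) \<le> \<beta> * G"
      unfolding E \<beta>_def using IH by (simp add: algebra_simps)
    then have "H * (\<Sum>S\<in>Vs X (Suc k). (Up X k g S)^2) \<le> H * (\<beta> * G)" using Hn by (rule mult_left_mono)
    then have "G * G \<le> (\<beta> * H) * G" using CS by (simp add: power2_eq_square algebra_simps)
    moreover have bn: "\<beta> \<ge> 0" unfolding \<beta>_def N_def using N Suc by simp
    ultimately have "G \<le> \<beta> * H"
    proof (cases "G = 0")
      case True
      then show ?thesis using bn Hn by simp
    next
      case False
      then have "G > 0" using Gn by simp
      then show ?thesis using \<open>G * G \<le> (\<beta> * H) * G\<close> by (simp add: mult_le_cancel_right)
    qed
    then show "nsq X (Suc k - 1) (Dn X (Suc k) h) \<le> (real (Suc k) - 2) * (real (card X) - real (Suc k) - 1) * nsq X (Suc k) h"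
      unfolding G_def g_def \<beta>_def H_def N_def by simp
  qed
qed



lemma Up_cong: "(\<And>T. T \<in> Vs X r \<Longrightarrow> g T = g' T) \<Longrightarrow> Up X r g S = Up X r g' S"
  unfolding Up_def by (intro sum.cong) auto

lemma Dn_cong: "(\<And>S. S \<in> Vs X k \<Longrightarrow> h S = h' S) \<Longrightarrow> Dn X k h T = Dn X k h' T"
  unfolding Dn_def by (intro sum.cong) auto

lemma Dn_diff: "Dn X k (\<lambda>S. h S - h' S) T = Dn X k h T - Dn X k h' T"
  unfolding Dn_def by (auto simp: sum_subtractf[symmetric] intro!: sum.cong)

lemma Up_diff: "Up X r (\<lambda>S. h S - h' S) T = Up X r h T - Up X r h' T"
  unfolding Up_def by (auto simp: sum_subtractf[symmetric] intro!: sum.cong)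

lemma UD_adj:
  assumes X: "finite X" and S: "S \<in> Vs X w" and w: "w \<ge> 1"
  shows "Up X (w-1) (Dn X w h) S = real w * h S + (\<Sum>y\<in>{y\<in>Vs X w. card (S \<inter> y) = w - 1}. h y)"
proof -
  have SX: "S \<subseteq> X" "card S = w" using S unfolding Vs_def by auto
  have fS: "finite S" using SX X finite_subset by blast
  have "Up X (w-1) (Dn X w h) S = (\<Sum>S'\<in>Vs X w. h S' * real (card (S \<inter> S') choose (w-1)))"
    unfolding UD_kernel[OF X] card_sub_inter[OF X SX(1)] ..
  also have "\<dots> = (\<Sum>S'\<in>Vs X w. (if S' = S then real w * h S' else 0) + (if card (S \<inter> S') = w - 1 then h S' else 0))"
  proof (intro sum.cong refl)
    fix S' assume S': "S' \<in> Vs X w"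
    then have S'X: "S' \<subseteq> X" "card S' = w" unfolding Vs_def by auto
    have le: "card (S \<inter> S') \<le> w" using SX fS card_mono by (metis Int_lower1)
    show "h S' * real (card (S \<inter> S') choose (w-1)) = (if S' = S then real w * h S' else 0) + (if card (S \<inter> S') = w - 1 then h S' else 0)"
    proof (cases "S' = S")
      case True
      moreover have "w choose (w-1) = w" using w by (cases w) auto
      moreover have "w - 1 \<noteq> w" using w by simp
      ultimately show ?thesis using SX w by simp
    next
      case False
      have "card (S \<inter> S') \<noteq> w"
      proof
        assume "card (S \<inter> S') = w"
        then have "S \<inter> S' = S" "S \<inter> S' = S'" using SX S'X fS X finite_subset
          by (metis Int_lower1 Int_lower2 card_subset_eq)+
        then show False using False by auto
      qed
      then have "card (S \<inter> S') < w" using le by auto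
      then show ?thesis using False by (cases "card (S \<inter> S') = w - 1") auto
    qed
  qed
  also have "\<dots> = real w * h S + (\<Sum>y\<in>{y\<in>Vs X w. card (S \<inter> y) = w - 1}. h y)"
    using S X by (simp add: sum.distrib sum.inter_filter)
  finally show ?thesis .
qed

definition Lf :: "(nat \<Rightarrow> real) \<Rightarrow> nat set \<Rightarrow> real" where
  "Lf c S = (\<Sum>i\<in>S. c i)"

lemma Lf_ind: "finite X \<Longrightarrow> S \<subseteq> X \<Longrightarrow> Lf c S = (\<Sum>i\<in>X. if i \<in> S then c i else 0)"
  unfolding Lf_def by (simp add: sum.inter_restrict[symmetric] Int_absorb1 inf.absorb2)

lemma DL:
  assumes X: "finite X" and T: "T \<in> Vs X (w-1)" and w: "w \<ge> 1" "w \<le> card X"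
  shows "Dn X w (Lf c) T = (real (card X) - real w) * Lf c T + sum c X"
proof -
  have TX: "T \<subseteq> X" "card T = w - 1" using T unfolding Vs_def by auto
  have fT: "finite T" using TX X finite_subset by blast
  have "Dn X w (Lf c) T = (\<Sum>S\<in>Vs X w. if T \<subseteq> S then (\<Sum>i\<in>X. if i \<in> S then c i else 0) else 0)"
    unfolding Dn_def using X by (intro sum.cong refl) (auto simp: Lf_ind Vs_def)
  also have "\<dots> = (\<Sum>i\<in>X. c i * card {S\<in>Vs X w. T \<subseteq> S \<and> i \<in> S})"
    using X by (intro sum_count) auto
  also have "\<dots> = (\<Sum>i\<in>X. c i + (if i \<in> T then (real (card X) - real w) * c i else 0))"
  proof (intro sum.cong refl)
    fix i assume i: "i \<in> X"
    have e: "{S\<in>Vs X w. T \<subseteq> S \<and> i \<in> S} = {S. S \<subseteq> X \<and> insert i T \<subseteq> S \<and> card S = w}"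
      unfolding Vs_def by auto
    show "c i * card {S\<in>Vs X w. T \<subseteq> S \<and> i \<in> S} = c i + (if i \<in> T then (real (card X) - real w) * c i else 0)"
    proof (cases "i \<in> T")
      case True
      then have "insert i T = T" by auto
      then have "card {S\<in>Vs X w. T \<subseteq> S \<and> i \<in> S} = (card X - (w-1)) choose (w - (w-1))"
        unfolding e using card_between[OF X TX(1), of w] TX w by simp
      also have "\<dots> = card X - (w - 1)" using w by simp
      finally show ?thesis using True w by (simp add: of_nat_diff algebra_simps)
    next
      case False
      then have "card (insert i T) = w" using fT TX w by simp
      then have "card {S\<in>Vs X w. T \<subseteq> S \<and> i \<in> S} = (card X - w) choose 0"
        unfolding e using card_between[OF X, of "insert i T" w] TX i by simp
      then show ?thesis using False by simp
    qed
  qed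
  also have "\<dots> = (real (card X) - real w) * Lf c T + sum c X"
    using X TX by (subst sum.distrib) (simp add: Lf_ind sum_distrib_left if_distrib add.commute cong: if_cong)
  finally show ?thesis .
qed

lemma UDL:
  assumes X: "finite X" and S: "S \<in> Vs X w" and w: "w \<ge> 2" "w \<le> card X"
  shows "Up X (w-1) (Dn X w (Lf c)) S = (real (card X) - real w) * (real w - 1) * Lf c S + real w * sum c X"
proof -
  have SX: "S \<subseteq> X" "card S = w" using S unfolding Vs_def by auto
  have fS: "finite S" using SX X finite_subset by blast
  have "Up X (w-1) (Dn X w (Lf c)) S = Up X (w-1) (\<lambda>T. (real (card X) - real w) * Lf c T + sum c X) S"
    using DL[OF X _ _ w(2)] w by (intro Up_cong) auto
  also have "\<dots> = (\<Sum>T\<in>Vs X (w-1). if T \<subseteq> S then (real (card X) - real w) * (\<Sum>i\<in>X. if i \<in> T then c i else 0) else 0)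
       + (\<Sum>T\<in>Vs X (w-1). if T \<subseteq> S then sum c X else 0)"
    unfolding Up_def using X by (simp add: sum.distrib[symmetric] Lf_ind Vs_def cong: if_cong)
      (intro sum.cong refl, auto simp: Lf_ind)
  also have "(\<Sum>T\<in>Vs X (w-1). if T \<subseteq> S then sum c X else 0) = real w * sum c X"
  proof -
    have "(\<Sum>T\<in>Vs X (w-1). if T \<subseteq> S then sum c X else 0) = card {T\<in>Vs X (w-1). T \<subseteq> S \<and> T \<subseteq> S} * sum c X"
      using X by (simp add: sum.If_cases Int_def)
    also have "card {T\<in>Vs X (w-1). T \<subseteq> S \<and> T \<subseteq> S} = w"
      unfolding card_sub_inter[OF X SX(1)] using SX w by (cases w) auto
    finally show ?thesis .
  qed
  also have "(\<Sum>T\<in>Vs X (w-1). if T \<subseteq> S then (real (card X) - real w) * (\<Sum>i\<in>X. if i \<in> T then c i else 0) else 0)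
     = (real (card X) - real w) * (\<Sum>T\<in>Vs X (w-1). if T \<subseteq> S then (\<Sum>i\<in>X. if i \<in> T then c i else 0) else 0)"
    by (simp add: sum_distrib_left if_distrib cong: if_cong)
  also have "(\<Sum>T\<in>Vs X (w-1). if T \<subseteq> S then (\<Sum>i\<in>X. if i \<in> T then c i else 0) else 0)
     = (\<Sum>i\<in>X. c i * card {T\<in>Vs X (w-1). T \<subseteq> S \<and> i \<in> T})"
    using X by (intro sum_count) auto
  also have "\<dots> = (\<Sum>i\<in>X. (real w - 1) * (if i \<in> S then c i else 0))"
  proof (intro sum.cong refl)
    fix i assume i: "i \<in> X"
    show "c i * card {T\<in>Vs X (w-1). T \<subseteq> S \<and> i \<in> T} = (real w - 1) * (if i \<in> S then c i else 0)"
    proof (cases "i \<in> S")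
      case True
      have e: "{T\<in>Vs X (w-1). T \<subseteq> S \<and> i \<in> T} = {T. T \<subseteq> S \<and> {i} \<subseteq> T \<and> card T = w - 1}"
        using SX unfolding Vs_def by auto
      have "card {T. T \<subseteq> S \<and> {i} \<subseteq> T \<and> card T = w - 1} = (card S - 1) choose (w - 1 - 1)"
        using card_between[OF fS, of "{i}" "w-1"] True w by simp
      also have "\<dots> = w - 1"
      proof -
        obtain m where "w = Suc (Suc m)" using w by (metis add_2_eq_Suc le_Suc_ex)
        then show ?thesis using SX by simp
      qed
      finally show ?thesis using True e w by (simp add: of_nat_diff)
    next
      case False
      then have em: "{T\<in>Vs X (w-1). T \<subseteq> S \<and> i \<in> T} = {}" by auto
      show ?thesis using False by (simp only: em card.empty) simp
    qed
  qed
  also have "\<dots> = (real w - 1) * Lf c S" using X SX by (simp add: Lf_ind sum_distrib_left)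
  finally show ?thesis by (simp add: algebra_simps)
qed

lemma Dn_one:
  assumes X: "finite X" and T: "T \<in> Vs X (w-1)" and w: "w \<ge> 1" "w \<le> card X"
  shows "Dn X w (\<lambda>_. 1) T = real (card X) - real w + 1"
proof -
  have TX: "T \<subseteq> X" "card T = w - 1" using T unfolding Vs_def by auto
  have "Dn X w (\<lambda>_. 1) T = card {S\<in>Vs X w. T \<subseteq> S \<and> T \<subseteq> S}"
    unfolding Dn_def using X by (simp add: sum.If_cases Int_def)
  also have "\<dots> = (card X - (w - 1)) choose 1"
    unfolding card_sup_union[OF X TX(1) TX(1)] using TX w by simp
  finally show ?thesis using w by (simp add: of_nat_diff)
qed

lemma Up_one:
  assumes X: "finite X" and S: "S \<in> Vs X w" and w: "w \<ge> 1"
  shows "Up X (w-1) (\<lambda>_. 1) S = real w"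
proof -
  have SX: "S \<subseteq> X" "card S = w" using S unfolding Vs_def by auto
  have "Up X (w-1) (\<lambda>_. 1) S = card {T\<in>Vs X (w-1). T \<subseteq> S \<and> T \<subseteq> S}"
    unfolding Up_def using X by (simp add: sum.If_cases Int_def)
  also have "\<dots> = w choose (w - 1)"
    unfolding card_sub_inter[OF X SX(1)] using SX by simp
  also have "\<dots> = w" using w by (cases w) auto
  finally show ?thesis .
qed

lemma linear_form:
  fixes f :: "nat set \<Rightarrow> real"
  assumes X: "finite X" and N: "card X = n" and w: "2 \<le> w" and nw: "2 * w \<le> n"
    and eig: "\<forall>S\<in>Vs X w. ((real w - 1) * (real n - real w - 1) - 1) * f S
                 = (\<Sum>y\<in>{y\<in>Vs X w. card (S \<inter> y) = w - 1}. f y)"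
  shows "\<exists>c. sum c X = 0 \<and> (\<forall>S\<in>Vs X w. f S = Lf c S) \<and> (\<Sum>S\<in>Vs X w. f S) = 0"
proof -
  have w1: "w \<ge> 1" and wn: "w \<le> card X" using w nw N by auto
  have UDf: "Up X (w-1) (Dn X w f) S = (real w - 1) * (real n - real w) * f S" if S: "S \<in> Vs X w" for S
    using UD_adj[OF X S w1, of f] eig S by (simp add: algebra_simps)
  define \<sigma> where "\<sigma> = (\<Sum>S\<in>Vs X w. f S)"
  have s1: "(\<Sum>T\<in>Vs X (w-1). Dn X w f T * Dn X w (\<lambda>_. 1) T) = (real w - 1) * (real n - real w) * \<sigma>"
  proof -
    have "(\<Sum>T\<in>Vs X (w-1). Dn X w f T * Dn X w (\<lambda>_. 1) T) = (\<Sum>S\<in>Vs X w. 1 * Up X (w-1) (Dn X w f) S)"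
      by (rule adjoint[OF X])
    also have "\<dots> = (\<Sum>S\<in>Vs X w. (real w - 1) * (real n - real w) * f S)"
      by (intro sum.cong refl) (simp only: UDf mult_1_left)
    finally show ?thesis by (simp add: \<sigma>_def sum_distrib_left)
  qed
  have s2: "(\<Sum>T\<in>Vs X (w-1). Dn X w f T * Dn X w (\<lambda>_. 1) T) = (real n - real w + 1) * (\<Sum>T\<in>Vs X (w-1). Dn X w f T)"
    using Dn_one[OF X _ w1 wn] N by (simp add: sum_distrib_left mult.commute)
  have s3: "(\<Sum>T\<in>Vs X (w-1). Dn X w f T) = real w * \<sigma>"
  proof -
    have "(\<Sum>T\<in>Vs X (w-1). Dn X w f T) = (\<Sum>T\<in>Vs X (w-1). 1 * Dn X w f T)" by simp
    also have "\<dots> = (\<Sum>S\<in>Vs X w. f S * Up X (w-1) (\<lambda>_. 1) S)"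
      by (rule adjoint[OF X])
    also have "\<dots> = (\<Sum>S\<in>Vs X w. real w * f S)"
      by (intro sum.cong refl) (simp only: Up_one[OF X _ w1] mult.commute)
    finally show ?thesis by (simp add: \<sigma>_def sum_distrib_left)
  qed
  have "(real n - real w + 1) * (real w * \<sigma>) = (real w - 1) * (real n - real w) * \<sigma>"
    unfolding s3[symmetric] s2[symmetric] s1 ..
  then have "real n * \<sigma> = 0" by (simp add: algebra_simps)
  then have sig0: "\<sigma> = 0" using nw w by simp
  define F where "F i = (\<Sum>S\<in>Vs X w. if i \<in> S then f S else 0)" for i
  define B where "B = real ((n - 2) choose (w - 1))"
  have Bpos: "B > 0" unfolding B_def using nw w by simp
  define c where "c i = F i / B" for i
  have sumF: "(\<Sum>i\<in>X. F i) = real w * \<sigma>"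
  proof -
    have "(\<Sum>i\<in>X. F i) = (\<Sum>S\<in>Vs X w. \<Sum>i\<in>X. if i \<in> S then f S else 0)"
      unfolding F_def by (rule sum.swap)
    also have "\<dots> = (\<Sum>S\<in>Vs X w. real w * f S)"
    proof (intro sum.cong refl)
      fix S assume "S \<in> Vs X w"
      then have SX: "S \<subseteq> X" "card S = w" unfolding Vs_def by auto
      have "(\<Sum>i\<in>X. if i \<in> S then f S else 0) = (\<Sum>i\<in>X \<inter> S. f S)"
        using sum.inter_restrict[OF X, of "\<lambda>_. f S" S] by simp
      also have "X \<inter> S = S" using SX by auto
      finally show "(\<Sum>i\<in>X. if i \<in> S then f S else 0) = real w * f S" using SX by simp
    qed
    finally show ?thesis unfolding \<sigma>_def by (simp add: sum_distrib_left)
  qed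
  have sc: "sum c X = 0" unfolding c_def using sumF sig0 by (simp add: sum_divide_distrib[symmetric])
  have LF: "(\<Sum>S\<in>Vs X w. if i \<in> S then Lf c S else 0) = c i * B" if i: "i \<in> X" for i
  proof -
    have "(\<Sum>S\<in>Vs X w. if i \<in> S then Lf c S else 0) = (\<Sum>S\<in>Vs X w. if i \<in> S then (\<Sum>j\<in>X. if j \<in> S then c j else 0) else 0)"
      using X by (intro sum.cong refl) (auto simp: Lf_ind Vs_def)
    also have "\<dots> = (\<Sum>j\<in>X. c j * card {S\<in>Vs X w. i \<in> S \<and> j \<in> S})"
      using X by (intro sum_count) auto
    also have "\<dots> = (\<Sum>j\<in>X. c j * real ((n-2) choose (w-2)) + (if j = i then c j * B else 0))"
    proof (intro sum.cong refl)
      fix j assume j: "j \<in> X"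
      have e: "{S\<in>Vs X w. i \<in> S \<and> j \<in> S} = {S. S \<subseteq> X \<and> {i, j} \<subseteq> S \<and> card S = w}"
        unfolding Vs_def by auto
      show "c j * card {S\<in>Vs X w. i \<in> S \<and> j \<in> S} = c j * real ((n-2) choose (w-2)) + (if j = i then c j * B else 0)"
      proof (cases "j = i")
        case True
        have "card {S\<in>Vs X w. i \<in> S \<and> j \<in> S} = (n - 1) choose (w - 1)"
          unfolding e using card_between[OF X, of "{i,j}" w] True i w N by simp
        also have "\<dots> = ((n-2) choose (w-2)) + ((n-2) choose (w-1))"
        proof -
          obtain m where m: "n = Suc (Suc m)" using nw w by (metis add_2_eq_Suc le_Suc_ex le_trans mult_2 le_add1 order.trans)
          obtain v where v: "w = Suc (Suc v)" using w by (metis add_2_eq_Suc le_Suc_ex)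
          show ?thesis unfolding m v by simp
        qed
        finally show ?thesis using True unfolding B_def by (simp add: algebra_simps)
      next
        case False
        have "card {S\<in>Vs X w. i \<in> S \<and> j \<in> S} = (n - 2) choose (w - 2)"
          unfolding e using card_between[OF X, of "{i,j}" w] False i j w N by (simp add: numeral_2_eq_2)
        then show ?thesis using False by simp
      qed
    qed
    also have "\<dots> = c i * B"
      using X i sc by (simp add: sum.distrib sum_distrib_right[symmetric])
    finally show ?thesis .
  qed
  define h where "h S = f S - Lf c S" for S
  have Ch: "Cz X w h"
    unfolding Cz_def
  proof
    fix i assume i: "i \<in> X"
    have "(\<Sum>S\<in>Vs X w. if i \<in> S then h S else 0) = F i - (\<Sum>S\<in>Vs X w. if i \<in> S then Lf c S else 0)"
      unfolding F_def h_def by (auto simp: sum_subtractf[symmetric] intro!: sum.cong)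
    also have "\<dots> = 0" using LF[OF i] Bpos unfolding c_def by simp
    finally show "(\<Sum>S\<in>Vs X w. if i \<in> S then h S else 0) = 0" .
  qed
  have Dh: "Dn X w h = (\<lambda>T. Dn X w f T - Dn X w (Lf c) T)"
    unfolding h_def by (rule ext) (rule Dn_diff)
  have UDh: "Up X (w-1) (Dn X w h) S = (real w - 1) * (real n - real w) * h S" if S: "S \<in> Vs X w" for S
    unfolding Dh Up_diff UDf[OF S] UDL[OF X S w wn] sc h_def N by (simp add: algebra_simps)
  have E: "nsq X (w-1) (Dn X w h) = (real w - 1) * (real n - real w) * nsq X w h"
  proof -
    have "nsq X (w-1) (Dn X w h) = (\<Sum>T\<in>Vs X (w-1). Dn X w h T * Dn X w h T)"
      unfolding nsq_def power2_eq_square ..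
    also have "\<dots> = (\<Sum>S\<in>Vs X w. h S * Up X (w-1) (Dn X w h) S)" by (rule adjoint[OF X])
    also have "\<dots> = (\<Sum>S\<in>Vs X w. (real w - 1) * (real n - real w) * (h S)^2)"
      by (intro sum.cong refl) (simp only: UDh power2_eq_square mult.commute mult.left_commute)
    finally show ?thesis unfolding nsq_def by (simp add: sum_distrib_left)
  qed
  have Q: "nsq X (w-1) (Dn X w h) \<le> (real w - 2) * (real n - real w - 1) * nsq X w h"
    using Qbound[OF X w] nw Ch N by auto
  have "(real n - 2) * nsq X w h \<le> 0" using E Q by (simp add: algebra_simps)
  moreover have "real n - 2 > 0" using nw w by simp
  ultimately have "nsq X w h \<le> 0" by (simp add: mult_le_0_iff)
  then have "nsq X w h = 0" using nsq_nonneg[of X w h] by simp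
  then have "\<forall>S\<in>Vs X w. (h S)^2 = 0" unfolding nsq_def using X
    by (subst (asm) sum_nonneg_eq_0_iff) auto
  then have "\<forall>S\<in>Vs X w. f S = Lf c S" unfolding h_def by simp
  then show ?thesis using sc sig0 unfolding \<sigma>_def by blast
qed



lemma perm_exists:
  assumes X: "finite X" and AX: "A \<subseteq> X" and BX: "B \<subseteq> X" and h: "bij_betw h A B"
  shows "\<exists>\<pi>. \<pi> permutes X \<and> (\<forall>x\<in>A. \<pi> x = h x)"
proof -
  have fA: "finite A" using X AX finite_subset by blast
  have "card A = card B" using h by (rule bij_betw_same_card)
  then have "card (X - A) = card (X - B)" using AX BX X fA by (simp add: card_Diff_subset finite_subset)
  then obtain g where g: "bij_betw g (X - A) (X - B)" using X finite_same_card_bij by blast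
  define \<pi> where "\<pi> x = (if x \<in> A then h x else if x \<in> X then g x else x)" for x
  have b1: "bij_betw \<pi> A B" using h unfolding \<pi>_def by (rule bij_betw_cong[THEN iffD1, rotated]) auto
  have b2: "bij_betw \<pi> (X - A) (X - B)" using g unfolding \<pi>_def by (rule bij_betw_cong[THEN iffD1, rotated]) auto
  have "bij_betw \<pi> (A \<union> (X - A)) (B \<union> (X - B))" using bij_betw_combine[OF b1 b2] by auto
  then have "bij_betw \<pi> X X" using AX BX by (simp add: Un_absorb1 Un_Diff_cancel)
  then have "\<pi> permutes X" by (rule bij_imp_permutes) (use AX in \<open>auto simp: \<pi>_def\<close>)
  then show ?thesis unfolding \<pi>_def by auto
qed

lemma perm_mem: "\<pi> permutes X \<Longrightarrow> (\<pi> x \<in> \<pi> ` S) = (x \<in> S)"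
  using permutes_inj by (metis inj_image_mem_iff)

lemma perm_card: "\<pi> permutes X \<Longrightarrow> card (\<pi> ` A \<inter> \<pi> ` S) = card (A \<inter> S)"
proof -
  assume p: "\<pi> permutes X"
  then have i: "inj \<pi>" by (rule permutes_inj)
  then have "\<pi> ` A \<inter> \<pi> ` S = \<pi> ` (A \<inter> S)" by (simp add: image_Int)
  then show ?thesis using i by (simp add: card_image inj_on_subset)
qed

lemma f2_card: "f2 T = real (card ({1,2} \<inter> T)) - 1"
proof -
  have "{1,2} \<inter> T = (if 1 \<in> T then {1} else {}) \<union> (if 2 \<in> T then {2::nat} else {})" by auto
  then show ?thesis unfolding f2_def by (auto simp: card_insert_if)
qed

lemma f4_card:
  assumes "T \<subseteq> {1..n}" "card T = 2"
  shows "f4 n T = real (card ({1..n div 2} \<inter> T)) - 1"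
proof -
  have fT: "finite T" using assms(2) card.infinite by fastforce
  let ?P = "{1..n div 2}"
  have c: "card (?P \<inter> T) \<le> 2" using assms fT by (metis card_mono inf_le2)
  have e1: "T \<subseteq> ?P \<longleftrightarrow> card (?P \<inter> T) = 2"
  proof
    assume "T \<subseteq> ?P" then show "card (?P \<inter> T) = 2" using assms by (simp add: Int_absorb1)
  next
    assume "card (?P \<inter> T) = 2"
    then have "?P \<inter> T = T" using assms fT by (metis card_subset_eq inf_le2)
    then show "T \<subseteq> ?P" by blast
  qed
  have e2: "T \<subseteq> {n div 2 + 1..n} \<longleftrightarrow> card (?P \<inter> T) = 0"
  proof
    assume "T \<subseteq> {n div 2 + 1..n}"
    then have "?P \<inter> T = {}" by auto
    then show "card (?P \<inter> T) = 0" by simp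
  next
    assume "card (?P \<inter> T) = 0"
    then have "?P \<inter> T = {}" using fT by simp
    show "T \<subseteq> {n div 2 + 1..n}"
    proof
      fix x assume x: "x \<in> T"
      then have "x \<notin> ?P" "x \<in> {1..n}" using \<open>?P \<inter> T = {}\<close> assms(1) by auto
      then show "x \<in> {n div 2 + 1..n}" by auto
    qed
  qed
  have "f4 n T = (if card (?P \<inter> T) = 2 then 1 else if card (?P \<inter> T) = 0 then -1 else 0)"
    unfolding f4_def e1 e2 ..
  moreover have "card (?P \<inter> T) = 0 \<or> card (?P \<inter> T) = 1 \<or> card (?P \<inter> T) = 2" using c by linarith
  ultimately show ?thesis by auto
qed

lemma vals3: "x \<in> {-1,0,1::real} \<Longrightarrow> y \<in> {-1,0,1::real} \<Longrightarrow> x - y \<in> {-2,-1,0,1,2}"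
  by auto

lemma Lf_insert: "finite R \<Longrightarrow> i \<notin> R \<Longrightarrow> Lf c (insert i R) = c i + Lf c R"
  unfolding Lf_def by simp

lemma Lf_const: "(\<forall>i\<in>R. c i = t) \<Longrightarrow> Lf c R = real (card R) * t"
  unfolding Lf_def by simp

lemma Lf_split:
  assumes "finite S"
  shows "Lf c S = real (card S) * q + (\<Sum>i\<in>S. c i - q)"
  unfolding Lf_def using assms by (simp add: sum_subtractf)

lemma jv: "johnson_vertices n w = Vs {1..n} w"
  unfolding johnson_vertices_def Vs_def by simp

lemma equiv_intro:
  "\<pi> permutes {1..n} \<Longrightarrow> (\<forall>S\<in>Vs {1..n} w. g1 S = g2 (\<pi> ` S)) \<Longrightarrow> equivalent_fun n w g1 g2"
  unfolding equivalent_fun_def jv by blast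

lemma perm_set:
  assumes "finite X" "Q \<subseteq> X" "T \<subseteq> X" "card Q = card T"
  shows "\<exists>\<pi>. \<pi> permutes X \<and> \<pi> ` Q = T"
proof -
  have "finite Q" "finite T" using assms finite_subset by auto
  then obtain h where h: "bij_betw h Q T" using finite_same_card_bij assms(4) by blast
  obtain \<pi> where \<pi>: "\<pi> permutes X" "\<forall>x\<in>Q. \<pi> x = h x" using perm_exists[OF assms(1,2,3) h] by blast
  have "\<pi> ` Q = h ` Q" using \<pi>(2) by (intro image_cong) auto
  also have "\<dots> = T" using h by (simp add: bij_betw_def)
  finally show ?thesis using \<pi>(1) by blast
qed

lemma perm_sub: "\<pi> permutes X \<Longrightarrow> S \<subseteq> X \<Longrightarrow> \<pi> ` S \<subseteq> X"
proof -
  assume p: "\<pi> permutes X" and S: "S \<subseteq> X"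
  have "\<pi> ` X = X" using p by (rule permutes_image)
  then show ?thesis using S by blast
qed

lemma perm_cardS: "\<pi> permutes X \<Longrightarrow> card (\<pi> ` S) = card S"
proof -
  assume p: "\<pi> permutes X"
  have "inj \<pi>" using p by (rule permutes_inj)
  then have "inj_on \<pi> S" by (rule inj_on_subset) simp
  then show ?thesis by (rule card_image)
qed

lemma sum_ind: "finite S \<Longrightarrow> (\<Sum>i\<in>S. if i \<in> A then 1 else 0) = real (card (S \<inter> A))"
proof -
  assume fS: "finite S"
  have "(\<Sum>i\<in>S. if i \<in> A then 1 else 0) = (\<Sum>i\<in>S \<inter> A. (1::real))"
    using sum.inter_restrict[OF fS, of "\<lambda>_. (1::real)" A] by simp
  then show ?thesis by simp
qed

lemma arith_cls:
  fixes k \<alpha> n w :: nat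
  assumes "w \<ge> 2" "2 * w \<le> n" "\<alpha> \<le> n" "k \<le> w" "k \<le> \<alpha>" "w * \<alpha> = n * (k + 1)"
    "k = 0 \<or> n - \<alpha> = w - k" "k + 2 = w \<or> \<alpha> = k + 2"
  shows "(k = 0 \<and> \<alpha> = 2 \<and> n = 2 * w) \<or> (k = 0 \<and> w = 2 \<and> n = 2 * \<alpha>) \<or> (n = 2 * w \<and> \<alpha> + 2 = n \<and> k + 2 = w)"
proof -
  consider "k = 0" "k + 2 = w" | "k = 0" "\<alpha> = k + 2" | "n - \<alpha> = w - k" "\<alpha> = k + 2" | "n - \<alpha> = w - k" "k + 2 = w"
    using assms by blast
  then show ?thesis
  proof cases
    case 1
    then show ?thesis using assms by auto
  next
    case 2
    then show ?thesis using assms by auto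
  next
    case 3
    then have "n = w + 2" using assms by auto
    then have "w = 2" "n = 4" using assms by auto
    then have "k = 0" using assms 3 by auto
    then show ?thesis using 3 \<open>w = 2\<close> \<open>n = 4\<close> by auto
  next
    case 4
    then have n: "n = \<alpha> + 2" and ww: "w = k + 2" using assms by auto
    have "(k + 2) * \<alpha> = (\<alpha> + 2) * (k + 1)" using assms(6) unfolding n ww by simp
    then have "\<alpha> = 2 * k + 2" by (simp add: algebra_simps)
    then show ?thesis using n ww by auto
  qed
qed

context
  fixes n w :: nat and f :: "nat set \<Rightarrow> real" and c :: "nat \<Rightarrow> real"
  assumes w: "2 \<le> w" and nw: "2 * w \<le> n"
    and lin: "\<forall>S\<in>Vs {1..n} w. f S = Lf c S"
    and vals: "\<forall>S\<in>Vs {1..n} w. f S \<in> {-1,0,1}"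
    and sc: "sum c {1..n} = 0"
    and sf: "(\<Sum>S\<in>Vs {1..n} w. f S) = 0"
    and nz: "\<exists>S\<in>Vs {1..n} w. f S \<noteq> 0"
begin

abbreviation "X \<equiv> {1..n}"

lemma fX: "finite X" "card X = n" by auto

lemma exsub: "Y \<subseteq> X \<Longrightarrow> k \<le> card Y \<Longrightarrow> \<exists>R. R \<subseteq> Y \<and> card R = k \<and> finite R"
  by (metis obtain_subset_with_card_n)

lemma card_rem2: "i \<in> X \<Longrightarrow> j \<in> X \<Longrightarrow> i \<noteq> j \<Longrightarrow> card (X - {i,j}) = n - 2"
  by (subst card_Diff_subset) auto

lemma ins_mem:
  assumes "i \<in> X" "R \<subseteq> X" "i \<notin> R" "card R = w - 1"
  shows "insert i R \<in> Vs X w" "f (insert i R) = c i + Lf c R"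
proof -
  have fR: "finite R" using assms(2) finite_subset by blast
  show "insert i R \<in> Vs X w" unfolding Vs_def using assms fR w by auto
  then show "f (insert i R) = c i + Lf c R" using lin Lf_insert[OF fR assms(3)] by auto
qed

lemma diffint:
  assumes "i \<in> X" "j \<in> X" "i \<noteq> j"
  shows "c i - c j \<in> {-2,-1,0,1,2}"
proof -
  have "w - 1 \<le> card (X - {i,j})" using card_rem2[OF assms] w nw by simp
  then obtain R where R: "R \<subseteq> X - {i,j}" "card R = w - 1" "finite R" using exsub by (meson Diff_subset order_trans exsub)
  have RX: "R \<subseteq> X" "i \<notin> R" "j \<notin> R" using R by auto
  have "f (insert i R) = c i + Lf c R" "f (insert j R) = c j + Lf c R"
    using ins_mem(2)[OF assms(1) RX(1,2) R(2)] ins_mem(2)[OF assms(2) RX(1,3) R(2)] by auto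
  moreover have "f (insert i R) \<in> {-1,0,1}" "f (insert j R) \<in> {-1,0,1}"
    using ins_mem(1)[OF assms(1) RX(1,2) R(2)] ins_mem(1)[OF assms(2) RX(1,3) R(2)] vals by auto
  ultimately show ?thesis using vals3 by fastforce
qed

lemma not_all_equal:
  assumes "\<forall>i\<in>X. c i = t"
  shows False
proof -
  have "sum c X = real n * t" using assms by simp
  then have "t = 0" using sc nw w by simp
  then have "\<forall>S\<in>Vs X w. f S = 0" using lin assms unfolding Lf_def Vs_def by (auto intro!: sum.neutral)
  then show False using nz by blast
qed

lemma exS:
  "\<exists>S1\<in>Vs X w. f S1 = 1" "\<exists>S2\<in>Vs X w. f S2 = -1"
proof -
  show "\<exists>S1\<in>Vs X w. f S1 = 1"
  proof (rule ccontr)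
    assume "\<not> ?thesis"
    then have le: "\<forall>S\<in>Vs X w. 0 \<le> - f S" using vals by force
    have "(\<Sum>S\<in>Vs X w. - f S) = 0" using sf by (simp add: sum_negf)
    then have "\<forall>S\<in>Vs X w. - f S = 0" using le sum_nonneg_eq_0_iff[of "Vs X w" "\<lambda>S. - f S"] by simp
    then show False using nz by auto
  qed
  show "\<exists>S2\<in>Vs X w. f S2 = -1"
  proof (rule ccontr)
    assume "\<not> ?thesis"
    then have le: "\<forall>S\<in>Vs X w. 0 \<le> f S" using vals by force
    then have "\<forall>S\<in>Vs X w. f S = 0" using sf sum_nonneg_eq_0_iff[of "Vs X w" f] by simp
    then show False using nz by auto
  qed
qed

lemma case2:
  assumes a: "a \<in> X" and b: "b \<in> X" and ab: "a \<noteq> b"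
    and mm: "\<forall>i\<in>X. c b \<le> c i \<and> c i \<le> c a" and d: "c a - c b = 2"
  shows "\<exists>\<kappa>::real. \<kappa> \<noteq> 0 \<and> (equivalent_fun n w (\<lambda>x. \<kappa> * f x) f1
            \<or> (n = 2 * w \<and> equivalent_fun n w (\<lambda>x. \<kappa> * f x) f2)
            \<or> (n = 2 * w \<and> equivalent_fun n w (\<lambda>x. \<kappa> * f x) f3)
            \<or> (w = 2 \<and> even n \<and> equivalent_fun n w (\<lambda>x. \<kappa> * f x) (f4 n)))"
proof -
  have fa: "Lf c R = 1 - c a" if R: "R \<subseteq> X - {a,b}" "card R = w - 1" for R
  proof -
    have RX: "R \<subseteq> X" "a \<notin> R" "b \<notin> R" using R by auto
    have "f (insert a R) = c a + Lf c R" "f (insert b R) = c b + Lf c R"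
      using ins_mem(2)[OF a RX(1,2) R(2)] ins_mem(2)[OF b RX(1,3) R(2)] by auto
    moreover have "f (insert a R) \<in> {-1,0,1}" "f (insert b R) \<in> {-1,0,1}"
      using ins_mem(1)[OF a RX(1,2) R(2)] ins_mem(1)[OF b RX(1,3) R(2)] vals by auto
    ultimately have "f (insert a R) = 1" using d by auto
    then show ?thesis using \<open>f (insert a R) = c a + Lf c R\<close> by simp
  qed
  have const: "c i = c j" if i: "i \<in> X - {a,b}" and j: "j \<in> X - {a,b}" for i j
  proof (cases "i = j")
    case False
    have "card {a,b,i,j} = 4" using ab i j False by (simp add: card_insert_if)
    moreover have "{a,b,i,j} \<subseteq> X" using a b i j by blast
    ultimately have "card (X - {a,b,i,j}) = n - 4" using card_Diff_subset[of "{a,b,i,j}" X] by simp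
    then have "w - 2 \<le> card (X - {a,b,i,j})" using nw w by simp
    then obtain R0 where R0: "R0 \<subseteq> X - {a,b,i,j}" "card R0 = w - 2" "finite R0"
      using exsub[of "X - {a,b,i,j}" "w-2"] by auto
    have "insert i R0 \<subseteq> X - {a,b}" "card (insert i R0) = w - 1"
         "insert j R0 \<subseteq> X - {a,b}" "card (insert j R0) = w - 1"
    proof -
      have "i \<notin> R0" "j \<notin> R0" using R0 by auto
      then show "insert i R0 \<subseteq> X - {a,b}" "card (insert i R0) = w - 1"
         "insert j R0 \<subseteq> X - {a,b}" "card (insert j R0) = w - 1"
        using R0 i j w by auto
    qed
    then have "Lf c (insert i R0) = Lf c (insert j R0)" using fa by simp
    moreover have "i \<notin> R0" "j \<notin> R0" using R0 by auto
    ultimately show ?thesis using Lf_insert[OF R0(3)] by simp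
  qed simp
  have "card (X - {a,b}) = n - 2" using card_rem2[OF a b ab] .
  then have "card (X - {a,b}) > 0" using nw w by simp
  then have "X - {a,b} \<noteq> {}" unfolding card_gt_0_iff by blast
  then obtain i0 where i0: "i0 \<in> X - {a,b}" by blast
  define t where "t = c i0"
  have ct: "\<forall>i\<in>X - {a,b}. c i = t" using const[OF _ i0] unfolding t_def by blast
  have cXab: "card (X - {a,b}) = n - 2" using card_rem2[OF a b ab] .
  have k1: "w - 1 \<le> card (X - {a,b})" using cXab nw w by simp
  obtain R1 where R1: "R1 \<subseteq> X - {a,b}" "card R1 = w - 1" "finite R1"
    using exsub[OF Diff_subset k1] by blast
  have "\<forall>i\<in>R1. c i = t" using ct R1(1) by blast
  then have "Lf c R1 = real (w - 1) * t" using Lf_const[of R1 c t] R1(2) by simp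
  then have e1: "(real w - 1) * t = 1 - c a"
    using fa[OF R1(1,2)] w by (simp add: of_nat_diff)
  have k2: "w \<le> card (X - {a,b})" using cXab nw w by simp
  obtain S0 where S0: "S0 \<subseteq> X - {a,b}" "card S0 = w" "finite S0"
    using exsub[OF Diff_subset k2] by blast
  have S0V: "S0 \<in> Vs X w" using S0 unfolding Vs_def by auto
  have "\<forall>i\<in>S0. c i = t" using ct S0(1) by blast
  then have "Lf c S0 = real w * t" using Lf_const[of S0 c t] S0 by simp
  moreover have "f S0 = Lf c S0" using lin S0V by blast
  moreover have "f S0 \<in> {-1,0,1}" using vals S0V by blast
  ultimately have wt: "real w * t \<in> {-1,0,1}" by simp
  have "sum c X = sum c {a,b} + sum c (X - {a,b})"
    using a b by (subst sum.subset_diff[of "{a,b}" X]) auto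
  also have "sum c (X - {a,b}) = real (n - 2) * t" using ct cXab by simp
  finally have "c a + c b + real (n - 2) * t = 0" using sc ab by simp
  then have e2: "c a + c b + (real n - 2) * t = 0" using nw w by (simp add: of_nat_diff)
  have "(real n - 2 * real w) * t = (c a + c b + (real n - 2) * t) + (c a - c b - 2) - 2 * (c a - 1 + (real w - 1) * t)"
    by (simp add: algebra_simps)
  then have e3: "(real n - 2 * real w) * t = 0" using e1 e2 d by simp
  have form: "f S = real w * t + (if a \<in> S then c a - t else 0) + (if b \<in> S then c b - t else 0)"
    if S: "S \<in> Vs X w" for S
  proof -
    have SX: "S \<subseteq> X" "card S = w" "finite S" using S unfolding Vs_def by (auto intro: finite_subset)
    have "f S = real w * t + (\<Sum>i\<in>S. c i - t)" using lin S Lf_split[OF SX(3), of c t] SX by simp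
    also have "(\<Sum>i\<in>S. c i - t) = (\<Sum>i\<in>S. (if i = a then c a - t else 0) + (if i = b then c b - t else 0))"
      using SX ct ab by (intro sum.cong refl) auto
    also have "\<dots> = (if a \<in> S then c a - t else 0) + (if b \<in> S then c b - t else 0)"
      using SX by (simp add: sum.distrib)
    finally show ?thesis by simp
  qed
  have ab_le: "1 \<le> n" "2 \<le> n" using nw w by auto
  show ?thesis
  proof (cases "t = 0")
    case True
    then have ca: "c a = 1" "c b = -1" using e1 d by auto
    define h where "h x = (if x = a then 1 else (2::nat))" for x
    have "bij_betw h {a,b} {1,2}" unfolding h_def bij_betw_def inj_on_def using ab by auto
    then obtain \<pi> where \<pi>: "\<pi> permutes X" "\<forall>x\<in>{a,b}. \<pi> x = h x"
      using perm_exists[of X "{a,b}" "{1,2}" h] a b ab_le by auto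
    have pa: "\<pi> a = 1" "\<pi> b = 2" using \<pi>(2) ab unfolding h_def by auto
    have "\<forall>S\<in>Vs X w. 1 * f S = f1 (\<pi> ` S)"
    proof
      fix S assume S: "S \<in> Vs X w"
      have "1 \<in> \<pi> ` S \<longleftrightarrow> a \<in> S" "2 \<in> \<pi> ` S \<longleftrightarrow> b \<in> S"
        using perm_mem[OF \<pi>(1)] pa by metis+
      then show "1 * f S = f1 (\<pi> ` S)" unfolding form[OF S] f1_def using True ca by auto
    qed
    then have "equivalent_fun n w (\<lambda>x. 1 * f x) f1" by (rule equiv_intro[OF \<pi>(1)])
    then show ?thesis by (intro exI[of _ "1"]) auto
  next
    case False
    then have n2: "n = 2 * w" using e3 by simp
    have wt2: "real w * t = 1 \<or> real w * t = -1" using wt False w by auto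
    then show ?thesis
    proof
      assume wt1: "real w * t = 1"
      then have ca: "c a - t = 0" "c b - t = -2" using e1 d by (auto simp: algebra_simps)
      define h where "h x = (1::nat)" for x :: nat
      have "bij_betw h {b} {1}" unfolding h_def bij_betw_def by auto
      then obtain \<pi> where \<pi>: "\<pi> permutes X" "\<forall>x\<in>{b}. \<pi> x = h x"
        using perm_exists[of X "{b}" "{1}" h] b ab_le by auto
      have pb: "\<pi> b = 1" using \<pi>(2) unfolding h_def by auto
      have "\<forall>S\<in>Vs X w. (-1) * f S = f3 (\<pi> ` S)"
      proof
        fix S assume S: "S \<in> Vs X w"
        have "1 \<in> \<pi> ` S \<longleftrightarrow> b \<in> S" using perm_mem[OF \<pi>(1)] pb by metis
        then show "(-1) * f S = f3 (\<pi> ` S)" unfolding form[OF S] f3_def using ca wt1 by auto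
      qed
      then have "equivalent_fun n w (\<lambda>x. (-1) * f x) f3" by (rule equiv_intro[OF \<pi>(1)])
      then show ?thesis using n2 by (intro exI[of _ "-1"]) auto
    next
      assume wt1: "real w * t = -1"
      then have ca: "c a - t = 2" "c b - t = 0" using e1 d by (auto simp: algebra_simps)
      define h where "h x = (1::nat)" for x :: nat
      have "bij_betw h {a} {1}" unfolding h_def bij_betw_def by auto
      then obtain \<pi> where \<pi>: "\<pi> permutes X" "\<forall>x\<in>{a}. \<pi> x = h x"
        using perm_exists[of X "{a}" "{1}" h] a ab_le by auto
      have pa: "\<pi> a = 1" using \<pi>(2) unfolding h_def by auto
      have "\<forall>S\<in>Vs X w. 1 * f S = f3 (\<pi> ` S)"
      proof
        fix S assume S: "S \<in> Vs X w"
        have "1 \<in> \<pi> ` S \<longleftrightarrow> a \<in> S" using perm_mem[OF \<pi>(1)] pa by metis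
        then show "1 * f S = f3 (\<pi> ` S)" unfolding form[OF S] f3_def using ca wt1 by auto
      qed
      then have "equivalent_fun n w (\<lambda>x. 1 * f x) f3" by (rule equiv_intro[OF \<pi>(1)])
      then show ?thesis using n2 by (intro exI[of _ "1"]) auto
    qed
  qed
qed

lemma case1:
  assumes a: "a \<in> X" and b: "b \<in> X" and ab: "a \<noteq> b"
    and mm: "\<forall>i\<in>X. c b \<le> c i \<and> c i \<le> c a" and d: "c a - c b = 1"
  shows "\<exists>\<kappa>::real. \<kappa> \<noteq> 0 \<and> (equivalent_fun n w (\<lambda>x. \<kappa> * f x) f1
            \<or> (n = 2 * w \<and> equivalent_fun n w (\<lambda>x. \<kappa> * f x) f2)
            \<or> (n = 2 * w \<and> equivalent_fun n w (\<lambda>x. \<kappa> * f x) f3)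
            \<or> (w = 2 \<and> even n \<and> equivalent_fun n w (\<lambda>x. \<kappa> * f x) (f4 n)))"
proof -
  define q where "q = c b"
  have c01: "c i - q = (if c i = q + 1 then 1 else 0)" if i: "i \<in> X" for i
  proof (cases "i = b")
    case True then show ?thesis unfolding q_def by simp
  next
    case False
    have "c i - c b \<in> {-2,-1,0,1,2}" using diffint[OF i b False] .
    moreover have "c b \<le> c i" "c i \<le> c a" using mm i by auto
    then have "0 \<le> c i - c b" "c i - c b \<le> 1" using d by auto
    ultimately have "c i - q = 0 \<or> c i - q = 1" unfolding q_def by auto
    then show ?thesis by auto
  qed
  define A where "A = {i\<in>X. c i = q + 1}"
  have AX: "A \<subseteq> X" unfolding A_def by auto
  have fA: "finite A" using AX finite_subset by blast
  have Lq: "Lf c S = real (card S) * q + real (card (S \<inter> A))" if SX: "S \<subseteq> X" for S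
  proof -
    have fS: "finite S" using SX finite_subset by blast
    have "(\<Sum>i\<in>S. c i - q) = (\<Sum>i\<in>S. if i \<in> A then 1 else 0)"
    proof (intro sum.cong refl)
      fix i assume "i \<in> S"
      then have iX: "i \<in> X" using SX by blast
      show "c i - q = (if i \<in> A then 1 else 0)" using c01[OF iX] iX unfolding A_def by simp
    qed
    then show ?thesis using Lf_split[OF fS, of c q] sum_ind[OF fS, of A] by simp
  qed
  have fS: "f S = real w * q + real (card (S \<inter> A))" if S: "S \<in> Vs X w" for S
    using lin S Lq[of S] unfolding Vs_def by auto
  define \<alpha> where "\<alpha> = card A"
  have XA: "X \<inter> A = A" using AX by blast
  have "sum c X = real n * q + real \<alpha>" using Lq[of X] unfolding Lf_def \<alpha>_def XA by simp
  then have sX: "real n * q + real \<alpha> = 0" using sc by simp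
  obtain S1 where S1: "S1 \<in> Vs X w" "f S1 = 1" using exS(1) by blast
  obtain S2 where S2: "S2 \<in> Vs X w" "f S2 = -1" using exS(2) by blast
  have S1X: "S1 \<subseteq> X" "card S1 = w" "finite S1" using S1 unfolding Vs_def by (auto intro: finite_subset)
  have S2X: "S2 \<subseteq> X" "card S2 = w" "finite S2" using S2 unfolding Vs_def by (auto intro: finite_subset)
  define k where "k = card (S2 \<inter> A)"
  have hk: "real w * q + real k = -1" using fS[OF S2(1)] S2(2) unfolding k_def by simp
  have h1r: "real (card (S1 \<inter> A)) = real k + 2" using fS[OF S1(1)] S1(2) hk by simp
  then have h1: "card (S1 \<inter> A) = k + 2" by linarith
  have kw: "k \<le> w" unfolding k_def using S2X card_mono by (metis Int_lower1)
  have ka: "k \<le> \<alpha>" unfolding k_def \<alpha>_def using fA card_mono by (metis Int_lower2)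
  have an: "\<alpha> \<le> n" unfolding \<alpha>_def using AX card_mono[of X A] by simp
  have "real w * real \<alpha> = real n * (real k + 1)"
  proof -
    have "real \<alpha> = - (real n * q)" using sX by linarith
    then have "real w * real \<alpha> = real w * (- (real n * q))" by simp
    also have "\<dots> = real n * (- (real w * q))" by (simp add: algebra_simps)
    also have "\<dots> = real n * (real k + 1)"
    proof -
      have "- (real w * q) = real k + 1" using hk by linarith
      then show ?thesis by simp
    qed
    finally show ?thesis .
  qed
  then have wa: "w * \<alpha> = n * (k + 1)" by (metis of_nat_1 of_nat_add of_nat_eq_iff of_nat_mult)
  have N1: "k = 0 \<or> n - \<alpha> = w - k"
  proof (rule ccontr)
    assume "\<not> ?thesis"
    then have k0: "k \<noteq> 0" and ne: "n - \<alpha> \<noteq> w - k" by auto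
    have cS2A: "card (S2 - A) = w - k" using card_Int_Diff[OF S2X(3), of A] S2X unfolding k_def by simp
    have cXA: "card (X - A) = n - \<alpha>" unfolding \<alpha>_def using card_Diff_subset[OF fA AX] by simp
    have "\<not> X - A \<subseteq> S2"
    proof
      assume "X - A \<subseteq> S2"
      then have "X - A = S2 - A" using S2X by auto
      then show False using cS2A cXA ne by simp
    qed
    then obtain y where y: "y \<in> X" "y \<notin> A" "y \<notin> S2" by blast
    have "S2 \<inter> A \<noteq> {}" using k0 unfolding k_def by auto
    then obtain x where x: "x \<in> S2" "x \<in> A" by blast
    define S' where "S' = insert y (S2 - {x})"
    have cS': "card S' = w" unfolding S'_def using S2X x y w by (simp add: card_insert_if)
    have S'V: "S' \<in> Vs X w" unfolding Vs_def using cS' S2X y unfolding S'_def by auto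
    have "S' \<inter> A = (S2 \<inter> A) - {x}" unfolding S'_def using y by auto
    then have "card (S' \<inter> A) = k - 1" unfolding k_def using x S2X by simp
    then have "f S' = real w * q + real k - 1" using fS[OF S'V] k0 by (simp add: of_nat_diff)
    then have "f S' = -2" using hk by simp
    then show False using vals S'V by force
  qed
  have N2: "k + 2 = w \<or> \<alpha> = k + 2"
  proof (rule ccontr)
    assume "\<not> ?thesis"
    then have ne1: "k + 2 \<noteq> w" and ne2: "\<alpha> \<noteq> k + 2" by auto
    have "\<not> S1 \<subseteq> A"
    proof
      assume "S1 \<subseteq> A"
      then have "S1 \<inter> A = S1" by auto
      then show False using h1 S1X ne1 by simp
    qed
    then obtain x where x: "x \<in> S1" "x \<notin> A" by blast
    have "\<not> A \<subseteq> S1"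
    proof
      assume "A \<subseteq> S1"
      then have "S1 \<inter> A = A" by auto
      then show False using h1 ne2 unfolding \<alpha>_def by simp
    qed
    then obtain y where y: "y \<in> A" "y \<notin> S1" by blast
    define S' where "S' = insert y (S1 - {x})"
    have cS': "card S' = w" unfolding S'_def using S1X x y w by (simp add: card_insert_if)
    have S'V: "S' \<in> Vs X w" unfolding Vs_def using cS' S1X y AX unfolding S'_def by auto
    have "S' \<inter> A = insert y (S1 \<inter> A)" unfolding S'_def using x y by auto
    then have "card (S' \<inter> A) = k + 3" using h1 y S1X by simp
    then have "f S' = real w * q + real k + 3" using fS[OF S'V] by simp
    then have "f S' = 2" using hk by simp
    then show False using vals S'V by force
  qed
  have n4: "{1,2} \<subseteq> X" using nw w by auto
  have cases: "(k = 0 \<and> \<alpha> = 2 \<and> n = 2 * w) \<or> (k = 0 \<and> w = 2 \<and> n = 2 * \<alpha>) \<or> (n = 2 * w \<and> \<alpha> + 2 = n \<and> k + 2 = w)"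
    by (rule arith_cls[OF w nw an kw ka wa N1 N2])
  then consider "k = 0" "\<alpha> = 2" "n = 2 * w" | "k = 0" "w = 2" "n = 2 * \<alpha>" | "n = 2 * w" "\<alpha> + 2 = n" "k + 2 = w"
    by blast
  then show ?thesis
  proof cases
    case 1
    have wq: "real w * q = -1" using hk 1 by simp
    have "card A = card {1,2::nat}" using 1 unfolding \<alpha>_def by simp
    then obtain \<pi> where \<pi>: "\<pi> permutes X" "\<pi> ` A = {1,2}"
      using perm_set[OF fX(1) AX n4] by blast
    have "\<forall>S\<in>Vs X w. 1 * f S = f2 (\<pi> ` S)"
    proof
      fix S assume S: "S \<in> Vs X w"
      have "card ({1,2} \<inter> \<pi> ` S) = card (A \<inter> S)" using perm_card[OF \<pi>(1), of A S] \<pi>(2) by simp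
      then show "1 * f S = f2 (\<pi> ` S)" unfolding f2_card fS[OF S] wq by (simp add: Int_commute)
    qed
    then have "equivalent_fun n w (\<lambda>x. 1 * f x) f2" by (rule equiv_intro[OF \<pi>(1)])
    then show ?thesis using 1 by (intro exI[of _ "1"]) auto
  next
    case 2
    have wq: "real w * q = -1" using hk 2 by simp
    have PX: "{1..n div 2} \<subseteq> X" by auto
    have "card A = card {1..n div 2}" using 2 unfolding \<alpha>_def by simp
    then obtain \<pi> where \<pi>: "\<pi> permutes X" "\<pi> ` A = {1..n div 2}"
      using perm_set[OF fX(1) AX PX] by blast
    have "\<forall>S\<in>Vs X w. 1 * f S = f4 n (\<pi> ` S)"
    proof
      fix S assume S: "S \<in> Vs X w"
      have SX: "S \<subseteq> X" "card S = 2" using S 2 unfolding Vs_def by auto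
      have "f4 n (\<pi> ` S) = real (card ({1..n div 2} \<inter> \<pi> ` S)) - 1"
        by (rule f4_card) (use perm_sub[OF \<pi>(1) SX(1)] perm_cardS[OF \<pi>(1)] SX in auto)
      also have "card ({1..n div 2} \<inter> \<pi> ` S) = card (A \<inter> S)" using perm_card[OF \<pi>(1), of A S] \<pi>(2) by simp
      finally show "1 * f S = f4 n (\<pi> ` S)" unfolding fS[OF S] wq by (simp add: Int_commute)
    qed
    then have "equivalent_fun n w (\<lambda>x. 1 * f x) (f4 n)" by (rule equiv_intro[OF \<pi>(1)])
    then show ?thesis using 2 by (intro exI[of _ "1"]) auto
  next
    case 3
    have wq: "real w * q = 1 - real w" using hk 3 by (simp add: algebra_simps)
    define B where "B = X - A"
    have BX: "B \<subseteq> X" unfolding B_def by auto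
    have cB: "card B = 2" unfolding B_def using card_Diff_subset[OF fA AX] 3 unfolding \<alpha>_def by simp
    have "card B = card {1,2::nat}" using cB by simp
    then obtain \<pi> where \<pi>: "\<pi> permutes X" "\<pi> ` B = {1,2}"
      using perm_set[OF fX(1) BX n4] by blast
    have "\<forall>S\<in>Vs X w. (-1) * f S = f2 (\<pi> ` S)"
    proof
      fix S assume S: "S \<in> Vs X w"
      have SX: "S \<subseteq> X" "card S = w" "finite S" using S unfolding Vs_def by (auto intro: finite_subset)
      have "S \<inter> B = S - A" unfolding B_def using SX by auto
      then have cc: "card (S \<inter> A) + card (S \<inter> B) = w" using card_Int_Diff[OF SX(3), of A] SX by simp
      have "card ({1,2} \<inter> \<pi> ` S) = card (B \<inter> S)" using perm_card[OF \<pi>(1), of B S] \<pi>(2) by simp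
      moreover have "real (card (S \<inter> A)) + real (card (S \<inter> B)) = real w" using cc by (metis of_nat_add)
      ultimately show "(-1) * f S = f2 (\<pi> ` S)" unfolding f2_card fS[OF S] wq
        by (simp add: Int_commute)
    qed
    then have "equivalent_fun n w (\<lambda>x. (-1) * f x) f2" by (rule equiv_intro[OF \<pi>(1)])
    then show ?thesis using 3 by (intro exI[of _ "-1"]) auto
  qed
qed

lemma classify:
  shows "\<exists>\<kappa>::real. \<kappa> \<noteq> 0 \<and> (equivalent_fun n w (\<lambda>x. \<kappa> * f x) f1
            \<or> (n = 2 * w \<and> equivalent_fun n w (\<lambda>x. \<kappa> * f x) f2)
            \<or> (n = 2 * w \<and> equivalent_fun n w (\<lambda>x. \<kappa> * f x) f3)
            \<or> (w = 2 \<and> even n \<and> equivalent_fun n w (\<lambda>x. \<kappa> * f x) (f4 n)))"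
proof -
  have ne: "c ` X \<noteq> {}" "finite (c ` X)" using nw w by auto
  obtain a where a: "a \<in> X" "c a = Max (c ` X)" using Max_in[OF ne(2) ne(1)] by auto
  obtain b where b: "b \<in> X" "c b = Min (c ` X)" using Min_in[OF ne(2) ne(1)] by auto
  have mm: "\<forall>i\<in>X. c b \<le> c i \<and> c i \<le> c a" using a b ne by auto
  have neq: "c a \<noteq> c b"
  proof
    assume "c a = c b"
    then have "\<forall>i\<in>X. c i = c a" using mm by force
    then show False by (rule not_all_equal)
  qed
  then have ab: "a \<noteq> b" by auto
  have "c a - c b \<in> {-2,-1,0,1,2}" by (rule diffint[OF a(1) b(1) ab])
  moreover have "c b \<le> c a" using mm a(1) by blast
  then have "c a - c b \<ge> 0" by simp
  ultimately have "c a - c b = 1 \<or> c a - c b = 2" using neq by auto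
  then show ?thesis
  proof
    assume "c a - c b = 1"
    then show ?thesis by (rule case1[OF a(1) b(1) ab mm])
  next
    assume "c a - c b = 2"
    then show ?thesis by (rule case2[OF a(1) b(1) ab mm])
  qed
qed

end

theorem theorem1:
  fixes n w :: nat and f :: "nat set \<Rightarrow> real"
  assumes "w \<ge> 2" and "n \<ge> 2 * w"
    and "\<forall>x\<in>johnson_vertices n w. f x \<in> {-1, 0, 1}"
    and "is_eigenfunction n w (lambda1 n w) f"
  shows "\<exists>c::real. c \<noteq> 0 \<and>
           (equivalent_fun n w (\<lambda>x. c * f x) f1
            \<or> (n = 2 * w \<and> equivalent_fun n w (\<lambda>x. c * f x) f2)
            \<or> (n = 2 * w \<and> equivalent_fun n w (\<lambda>x. c * f x) f3)
            \<or> (w = 2 \<and> even n \<and> equivalent_fun n w (\<lambda>x. c * f x) (f4 n)))"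
proof -
  have w: "2 \<le> w" and nw: "2 * w \<le> n" using assms(1,2) by auto
  have vals: "\<forall>S\<in>Vs {1..n} w. f S \<in> {-1,0,1}" using assms(3) unfolding jv by simp
  have nz: "\<exists>S\<in>Vs {1..n} w. f S \<noteq> 0" using assms(4) unfolding is_eigenfunction_def jv by simp
  have adj: "{y\<in>johnson_vertices n w. johnson_adj w x y} = {y\<in>Vs {1..n} w. card (x \<inter> y) = w - 1}" for x
    unfolding jv johnson_adj_def ..
  have eig: "\<forall>S\<in>Vs {1..n} w. ((real w - 1) * (real n - real w - 1) - 1) * f S
                 = (\<Sum>y\<in>{y\<in>Vs {1..n} w. card (S \<inter> y) = w - 1}. f y)"
    using assms(4) unfolding is_eigenfunction_def jv johnson_adj_def lambda1_def by simp
  obtain c where c: "sum c {1..n} = 0" "\<forall>S\<in>Vs {1..n} w. f S = Lf c S" "(\<Sum>S\<in>Vs {1..n} w. f S) = 0"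
    using linear_form[of "{1..n}" n w f] w nw eig by auto
  show ?thesis by (rule classify[OF w nw c(2) vals c(1) c(3) nz])
qed

end
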